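(* For any connected graphs $G$ and $H$, $\gamma_P(G \Box H) \le \min\{\gamma(G)Z(H),\ \gamma(H)Z(G)\}$.
   Context: $\gamma(G)$ is the domination number (minimum size of $D\subseteq V(G)$ with $N[D]=V(G)$). Zero forcing: starting from an observed set $Z$, repeatedly any vertex that is the only unobserved neighbor of some observed vertex becomes observed; $Z(G)$ is the minimum size of a set that eventually observes all vertices. Power domination: for $S\subseteq V(G)$, first all vertices of $S$ and their neighbors are observed, then the zero forcing rule is applied repeatedly; $\gamma_P(G)$ is the minimum size of an $S$ that eventually observes all vertices. $G\Box H$ is the Cartesian product: vertex set $V(G)\times V(H)$, with $(g_1,h_1)\sim(g_2,h_2)$ iff ($g_1=g_2$ and $h_1h_2\in E(H)$) or ($h_1=h_2$ and $g_1g_2\in E(G)$). *)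

theory Defs
  imports Main
begin

definition graph :: "'a set \<Rightarrow> ('a \<Rightarrow> 'a \<Rightarrow> bool) \<Rightarrow> bool" where
  "graph V E \<longleftrightarrow> finite V \<and> (\<forall>u v. E u v \<longrightarrow> u \<in> V \<and> v \<in> V)
     \<and> (\<forall>u v. E u v \<longrightarrow> E v u) \<and> (\<forall>v. \<not> E v v)"

definition connected_graph :: "'a set \<Rightarrow> ('a \<Rightarrow> 'a \<Rightarrow> bool) \<Rightarrow> bool" where
  "connected_graph V E \<longleftrightarrow> V \<noteq> {} \<and> (\<forall>u\<in>V. \<forall>v\<in>V. E\<^sup>*\<^sup>* u v)"

definition closed_nbhd :: "('a \<Rightarrow> 'a \<Rightarrow> bool) \<Rightarrow> 'a set \<Rightarrow> 'a set" where
  "closed_nbhd E D = D \<union> {w. \<exists>v\<in>D. E v w}"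

definition dominating_set :: "'a set \<Rightarrow> ('a \<Rightarrow> 'a \<Rightarrow> bool) \<Rightarrow> 'a set \<Rightarrow> bool" where
  "dominating_set V E D \<longleftrightarrow> D \<subseteq> V \<and> closed_nbhd E D = V"

definition domination_number :: "'a set \<Rightarrow> ('a \<Rightarrow> 'a \<Rightarrow> bool) \<Rightarrow> nat" where
  "domination_number V E = (LEAST k. \<exists>D. dominating_set V E D \<and> card D = k)"

definition force_step :: "'a set \<Rightarrow> ('a \<Rightarrow> 'a \<Rightarrow> bool) \<Rightarrow> 'a set \<Rightarrow> 'a set \<Rightarrow> bool" where
  "force_step V E S S' \<longleftrightarrow> (\<exists>v\<in>S. \<exists>w. {u \<in> V. E v u} - S = {w} \<and> S' = insert w S)"

definition zero_forcing_set :: "'a set \<Rightarrow> ('a \<Rightarrow> 'a \<Rightarrow> bool) \<Rightarrow> 'a set \<Rightarrow> bool" where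
  "zero_forcing_set V E Z \<longleftrightarrow> Z \<subseteq> V \<and> (force_step V E)\<^sup>*\<^sup>* Z V"

definition zero_forcing_number :: "'a set \<Rightarrow> ('a \<Rightarrow> 'a \<Rightarrow> bool) \<Rightarrow> nat" where
  "zero_forcing_number V E = (LEAST k. \<exists>Z. zero_forcing_set V E Z \<and> card Z = k)"

definition power_dominating_set :: "'a set \<Rightarrow> ('a \<Rightarrow> 'a \<Rightarrow> bool) \<Rightarrow> 'a set \<Rightarrow> bool" where
  "power_dominating_set V E S \<longleftrightarrow> S \<subseteq> V \<and> (force_step V E)\<^sup>*\<^sup>* (closed_nbhd E S) V"

definition power_domination_number :: "'a set \<Rightarrow> ('a \<Rightarrow> 'a \<Rightarrow> bool) \<Rightarrow> nat" where
  "power_domination_number V E = (LEAST k. \<exists>S. power_dominating_set V E S \<and> card S = k)"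

definition cart_edges :: "('a \<Rightarrow> 'a \<Rightarrow> bool) \<Rightarrow> ('b \<Rightarrow> 'b \<Rightarrow> bool) \<Rightarrow> ('a \<times> 'b) \<Rightarrow> ('a \<times> 'b) \<Rightarrow> bool" where
  "cart_edges E F x y \<longleftrightarrow> (fst x = fst y \<and> F (snd x) (snd y)) \<or> (snd x = snd y \<and> E (fst x) (fst y))"

end

theory Submission
  imports Defs
begin

lemma fs_mono:
  assumes "(force_step V E)\<^sup>*\<^sup>* A C"
  shows "(force_step V E)\<^sup>*\<^sup>* (A \<union> B) (C \<union> B)"
  using assms
proof (induction rule: rtranclp_induct)
  case base then show ?case by simp
next
  case (step C C')
  from step.hyps(2) obtain v w where v: "v \<in> C" and vw: "{u \<in> V. E v u} - C = {w}"
    and C': "C' = insert w C" unfolding force_step_def by blast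
  show ?case
  proof (cases "w \<in> C \<union> B")
    case True
    then have "C' \<union> B = C \<union> B" using C' by auto
    then show ?thesis using step.IH by simp
  next
    case False
    have "force_step V E (C \<union> B) (C' \<union> B)"
      unfolding force_step_def
      apply (rule bexI[of _ v])
       apply (rule exI[of _ w])
      using vw False C' v by auto
    then show ?thesis using step.IH by (meson rtranclp.rtrancl_into_rtrancl)
  qed
qed

lemma fiber:
  assumes gV: "graph V E" and fs: "force_step W F Y (insert h' Y)"
    and A: "finite A" "A \<subseteq> V"
  shows "(force_step (V \<times> W) (cart_edges E F))\<^sup>*\<^sup>* (V \<times> Y) (V \<times> Y \<union> A \<times> {h'})"
  using A
proof (induction A rule: finite_induct)
  case empty then show ?case by simp
next
  case (insert g A)
  from fs obtain h0 w where h0: "h0 \<in> Y" and h0w': "{u \<in> W. F h0 u} - Y = {w}"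
    and ins: "insert h' Y = insert w Y"
    unfolding force_step_def by blast
  have "w \<notin> Y" using h0w' by auto
  then have "w = h'" using ins by (metis insertE insertI1)
  then have h0w: "{u \<in> W. F h0 u} - Y = {h'}" using h0w' by simp
  have g: "g \<in> V" using insert by auto
  have h'Y: "h' \<notin> Y" using h0w by auto
  have EV: "\<And>x y. E x y \<Longrightarrow> y \<in> V" using gV unfolding graph_def by blast
  let ?X = "V \<times> Y \<union> A \<times> {h'}"
  have "force_step (V \<times> W) (cart_edges E F) ?X (insert (g, h') ?X)"
    unfolding force_step_def
  proof (rule bexI[of _ "(g,h0)"], rule exI[of _ "(g,h')"], rule conjI)
    show "{u \<in> V \<times> W. cart_edges E F (g, h0) u} - ?X = {(g, h')}"
    proof
      show "{u \<in> V \<times> W. cart_edges E F (g, h0) u} - ?X \<subseteq> {(g, h')}"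
      proof
        fix u assume u: "u \<in> {u \<in> V \<times> W. cart_edges E F (g, h0) u} - ?X"
        obtain a b where ab: "u = (a,b)" by force
        from u ab h0 have "a = g \<and> F h0 b \<and> b \<in> W \<and> b \<notin> Y"
          unfolding cart_edges_def by auto
        then show "u \<in> {(g, h')}" using h0w ab by auto
      qed
    next
      have "h' \<in> W" "F h0 h'" using h0w by auto
      then show "{(g, h')} \<subseteq> {u \<in> V \<times> W. cart_edges E F (g, h0) u} - ?X"
        using g h'Y insert(2) unfolding cart_edges_def by auto
    qed
  qed (use g h0 in auto)
  moreover have "insert (g, h') ?X = V \<times> Y \<union> insert g A \<times> {h'}" by auto
  ultimately show ?case using insert.IH insert.prems
    by (metis insert_subset rtranclp.rtrancl_into_rtrancl)
qed

lemma lift: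
  assumes gV: "graph V E" and r: "(force_step W F)\<^sup>*\<^sup>* Y Y'"
  shows "(force_step (V \<times> W) (cart_edges E F))\<^sup>*\<^sup>* (V \<times> Y) (V \<times> Y')"
  using r
proof (induction rule: rtranclp_induct)
  case base then show ?case by simp
next
  case (step C C')
  from step.hyps(2) obtain w where C': "C' = insert w C"
    unfolding force_step_def by blast
  have fV: "finite V" using gV unfolding graph_def by blast
  have "(force_step (V \<times> W) (cart_edges E F))\<^sup>*\<^sup>* (V \<times> C) (V \<times> C \<union> V \<times> {w})"
    using fiber[OF gV, of W F C w V] step.hyps(2) C' fV by auto
  moreover have "V \<times> C \<union> V \<times> {w} = V \<times> C'" using C' by auto
  ultimately show ?case using step.IH by (metis rtranclp_trans)
qed

lemma bound1:
  assumes gV: "graph V E" and gW: "graph W F"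
  shows "power_domination_number (V \<times> W) (cart_edges E F)
           \<le> domination_number V E * zero_forcing_number W F"
proof -
  have EV: "\<And>x y. E x y \<Longrightarrow> x \<in> V \<and> y \<in> V" using gV unfolding graph_def by blast
  have FW: "\<And>x y. F x y \<Longrightarrow> x \<in> W \<and> y \<in> W" using gW unfolding graph_def by blast
  have "dominating_set V E V" unfolding dominating_set_def closed_nbhd_def using EV by auto
  then have "\<exists>D. dominating_set V E D \<and> card D = domination_number V E"
    using LeastI_ex[of "\<lambda>k. \<exists>D. dominating_set V E D \<and> card D = k"] unfolding domination_number_def by blast
  then obtain D where D: "dominating_set V E D" "card D = domination_number V E" by blast
  have "zero_forcing_set W F W" unfolding zero_forcing_set_def by auto
  then have "\<exists>Z. zero_forcing_set W F Z \<and> card Z = zero_forcing_number W F"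
    using LeastI_ex[of "\<lambda>k. \<exists>Z. zero_forcing_set W F Z \<and> card Z = k"] unfolding zero_forcing_number_def by blast
  then obtain Z where Z: "zero_forcing_set W F Z" "card Z = zero_forcing_number W F" by blast
  let ?S = "D \<times> Z"
  let ?N = "closed_nbhd (cart_edges E F) ?S"
  have DV: "D \<subseteq> V" and ND: "closed_nbhd E D = V" using D unfolding dominating_set_def by auto
  have ZW: "Z \<subseteq> W" and rZ: "(force_step W F)\<^sup>*\<^sup>* Z W" using Z unfolding zero_forcing_set_def by auto
  have sub1: "V \<times> Z \<subseteq> ?N"
  proof
    fix x assume x: "x \<in> V \<times> Z"
    then obtain g h where gh: "x = (g,h)" "g \<in> V" "h \<in> Z" by auto
    then have "g \<in> closed_nbhd E D" using ND by simp
    then have "g \<in> D \<or> (\<exists>d\<in>D. E d g)" unfolding closed_nbhd_def by auto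
    then show "x \<in> ?N"
    proof
      assume "g \<in> D" then show ?thesis using gh unfolding closed_nbhd_def by auto
    next
      assume "\<exists>d\<in>D. E d g"
      then obtain d where "d \<in> D" "E d g" by blast
      then have "(d,h) \<in> ?S" "cart_edges E F (d,h) x" using gh unfolding cart_edges_def by auto
      then show ?thesis unfolding closed_nbhd_def by blast
    qed
  qed
  have sub2: "?N \<subseteq> V \<times> W"
    using DV ZW EV FW unfolding closed_nbhd_def cart_edges_def by fastforce
  have "(force_step (V \<times> W) (cart_edges E F))\<^sup>*\<^sup>* (V \<times> Z) (V \<times> W)"
    using lift[OF gV rZ] .
  from fs_mono[OF this, of ?N] sub1 sub2
  have "(force_step (V \<times> W) (cart_edges E F))\<^sup>*\<^sup>* ?N (V \<times> W)"
    by (simp add: Un_absorb1 Un_absorb2)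
  then have "power_dominating_set (V \<times> W) (cart_edges E F) ?S"
    unfolding power_dominating_set_def using DV ZW by auto
  then have "power_domination_number (V \<times> W) (cart_edges E F) \<le> card ?S"
    unfolding power_domination_number_def by (auto intro: Least_le)
  also have "card ?S = domination_number V E * zero_forcing_number W F"
    using D Z card_cartesian_product by metis
  finally show ?thesis .
qed

lemma swap_img: "prod.swap ` X = {(b,a). (a,b) \<in> X}"
  by force

lemma fs_swap:
  assumes "(force_step (W \<times> V) (cart_edges F E))\<^sup>*\<^sup>* A B"
  shows "(force_step (V \<times> W) (cart_edges E F))\<^sup>*\<^sup>* (prod.swap ` A) (prod.swap ` B)"
  using assms
proof (induction rule: rtranclp_induct)
  case base then show ?case by simp
next
  case (step C C')
  from step.hyps(2) obtain v w where v: "v \<in> C" and vw: "{u \<in> W \<times> V. cart_edges F E v u} - C = {w}"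
    and C': "C' = insert w C" unfolding force_step_def by blast
  have "{u \<in> V \<times> W. cart_edges E F (prod.swap v) u} - prod.swap ` C
        = prod.swap ` ({u \<in> W \<times> V. cart_edges F E v u} - C)"
    unfolding cart_edges_def swap_img by (cases v) auto
  then have "force_step (V \<times> W) (cart_edges E F) (prod.swap ` C) (prod.swap ` C')"
    unfolding force_step_def using v vw C'
    by (intro bexI[of _ "prod.swap v"] exI[of _ "prod.swap w"]) auto
  then show ?case using step.IH by (meson rtranclp.rtrancl_into_rtrancl)
qed

lemma pdn_swap:
  assumes gV: "graph V E" and gW: "graph W F"
  shows "power_domination_number (V \<times> W) (cart_edges E F) \<le> power_domination_number (W \<times> V) (cart_edges F E)"
proof -
  have "power_dominating_set (W \<times> V) (cart_edges F E) (W \<times> V)"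
  proof -
    have "closed_nbhd (cart_edges F E) (W \<times> V) = W \<times> V"
      using gV gW unfolding closed_nbhd_def graph_def cart_edges_def by auto
    then show ?thesis unfolding power_dominating_set_def by auto
  qed
  then have "\<exists>S. power_dominating_set (W \<times> V) (cart_edges F E) S \<and> card S = power_domination_number (W \<times> V) (cart_edges F E)"
    using LeastI_ex[of "\<lambda>k. \<exists>S. power_dominating_set (W \<times> V) (cart_edges F E) S \<and> card S = k"] unfolding power_domination_number_def by blast
  then obtain S where S: "power_dominating_set (W \<times> V) (cart_edges F E) S"
    "card S = power_domination_number (W \<times> V) (cart_edges F E)" by blast
  have cn: "closed_nbhd (cart_edges E F) (prod.swap ` S) = prod.swap ` closed_nbhd (cart_edges F E) S"
  proof (rule set_eqI)
    fix x :: "'a \<times> 'b"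
    obtain a b where x: "x = (a,b)" by force
    show "x \<in> closed_nbhd (cart_edges E F) (prod.swap ` S) \<longleftrightarrow> x \<in> prod.swap ` closed_nbhd (cart_edges F E) S"
      unfolding x closed_nbhd_def swap_img cart_edges_def
      by (simp, safe, auto)
  qed
  have "power_dominating_set (V \<times> W) (cart_edges E F) (prod.swap ` S)"
  proof -
    have "prod.swap ` (W \<times> V) = V \<times> W" by (simp add: product_swap)
    then show ?thesis
      using S(1) fs_swap[of W V F E "closed_nbhd (cart_edges F E) S" "W \<times> V"]
      unfolding power_dominating_set_def cn by (auto simp: product_swap)
  qed
  then have "power_domination_number (V \<times> W) (cart_edges E F) \<le> card (prod.swap ` S)"
    unfolding power_domination_number_def by (auto intro: Least_le)
  also have "\<dots> = card S" by (simp add: card_image)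
  finally show ?thesis using S(2) by simp
qed

theorem lemma3p8:
  fixes V :: "'a set" and E :: "'a \<Rightarrow> 'a \<Rightarrow> bool"
    and W :: "'b set" and F :: "'b \<Rightarrow> 'b \<Rightarrow> bool"
  assumes "graph V E" and "connected_graph V E"
    and "graph W F" and "connected_graph W F"
  shows "power_domination_number (V \<times> W) (cart_edges E F)
           \<le> min (domination_number V E * zero_forcing_number W F)
                 (domination_number W F * zero_forcing_number V E)"
  using bound1[OF assms(1,3)] bound1[OF assms(3,1)] pdn_swap[OF assms(1,3)]
  by simp

end
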